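(* Let $\mu$ be a smooth volume form on $S^2$ and let $G$ be an abelian pseudo-rotation subgroup of $\mathrm{Symp}^\infty_\mu(S^2)$. Then either $\mathrm{Fix}(g)$ is the same set for every non-trivial $g\in G$, or $G$ is isomorphic to $\mathbb{Z}/2\mathbb{Z}\oplus\mathbb{Z}/2\mathbb{Z}$. In the latter case the fixed point sets of the non-trivial elements of $G$ are pairwise disjoint, so their union contains six points.
   Context: $\mathrm{Symp}^\infty_\mu(S^2)$ is the group of $C^\infty$ diffeomorphisms of $S^2$ isotopic to the identity and preserving $\mu$. A subgroup is a pseudo-rotation group if every non-trivial element has exactly $2$ fixed points. *)

theory Defs
  imports "HOL-Analysis.Analysis" "HOL-Algebra.Algebra"
begin

abbreviation S2 :: "(real^3) set" where "S2 \<equiv> sphere 0 1"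

fun Ck_on :: "nat \<Rightarrow> 'a::real_normed_vector set \<Rightarrow> ('a \<Rightarrow> 'b::real_normed_vector) \<Rightarrow> bool" where
  "Ck_on 0 U f = continuous_on U f"
| "Ck_on (Suc k) U f = (f differentiable_on U \<and>
      (\<forall>v. Ck_on k U (\<lambda>x. frechet_derivative f (at x) v)))"

definition smooth_on :: "'a::real_normed_vector set \<Rightarrow> ('a \<Rightarrow> 'b::real_normed_vector) \<Rightarrow> bool" where
  "smooth_on U f \<longleftrightarrow> (\<forall>k. Ck_on k U f)"

definition smooth_ext :: "(real^3) set \<Rightarrow> (real^3 \<Rightarrow> 'b::real_normed_vector) \<Rightarrow> (real^3 \<Rightarrow> 'b) \<Rightarrow> bool" where
  "smooth_ext U F f \<longleftrightarrow> open U \<and> S2 \<subseteq> U \<and> smooth_on U F \<and> (\<forall>x\<in>S2. F x = f x)"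

definition smooth_S2 :: "(real^3 \<Rightarrow> 'b::real_normed_vector) \<Rightarrow> bool" where
  "smooth_S2 f \<longleftrightarrow> (\<exists>U F. smooth_ext U F f)"

definition diffeo_S2 :: "(real^3 \<Rightarrow> real^3) \<Rightarrow> bool" where
  "diffeo_S2 f \<longleftrightarrow> bij_betw f S2 S2 \<and> smooth_S2 f \<and> smooth_S2 (inv_into S2 f)"

text \<open>Standard area form of S^2: omega_x(u,v) = det[x,u,v] = x . (u x v).
  A smooth volume form mu on S^2 is rho * omega with rho smooth and nowhere zero.\<close>
definition volume_density :: "(real^3 \<Rightarrow> real) \<Rightarrow> bool" where
  "volume_density \<rho> \<longleftrightarrow> smooth_S2 \<rho> \<and> (\<forall>x\<in>S2. \<rho> x \<noteq> 0)"

text \<open>f^* mu = mu, with the derivative on tangent vectors computed from a smooth extension.\<close>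
definition preserves_form :: "(real^3 \<Rightarrow> real) \<Rightarrow> (real^3 \<Rightarrow> real^3) \<Rightarrow> bool" where
  "preserves_form \<rho> f \<longleftrightarrow> (\<exists>U F. smooth_ext U F f \<and>
     (\<forall>x\<in>S2. \<forall>u v. u \<bullet> x = 0 \<longrightarrow> v \<bullet> x = 0 \<longrightarrow>
        \<rho> (f x) * (f x \<bullet> cross3 (frechet_derivative F (at x) u) (frechet_derivative F (at x) v))
        = \<rho> x * (x \<bullet> cross3 u v)))"

definition isotopic_to_id :: "(real^3 \<Rightarrow> real^3) \<Rightarrow> bool" where
  "isotopic_to_id f \<longleftrightarrow> (\<exists>H :: real \<Rightarrow> real^3 \<Rightarrow> real^3.
     continuous_on ({0..1} \<times> S2) (\<lambda>(t,x). H t x) \<and>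
     (\<forall>t\<in>{0..1}. diffeo_S2 (H t)) \<and>
     (\<forall>x\<in>S2. H 0 x = x \<and> H 1 x = f x))"

text \<open>The group Symp^infty_mu(S^2); maps are normalised to be extensional on S^2.\<close>
definition Symp :: "(real^3 \<Rightarrow> real) \<Rightarrow> (real^3 \<Rightarrow> real^3) monoid" where
  "Symp \<rho> = \<lparr>carrier = {f. f \<in> extensional S2 \<and> diffeo_S2 f \<and> preserves_form \<rho> f \<and> isotopic_to_id f},
            monoid.mult = (\<lambda>g f. compose S2 g f),
            one = restrict id S2\<rparr>"

definition Fix :: "(real^3 \<Rightarrow> real^3) \<Rightarrow> (real^3) set" where
  "Fix g = {x \<in> S2. g x = x}"

definition pseudo_rotation_group :: "(real^3 \<Rightarrow> real) \<Rightarrow> (real^3 \<Rightarrow> real^3) set \<Rightarrow> bool" where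
  "pseudo_rotation_group \<rho> G \<longleftrightarrow> subgroup G (Symp \<rho>) \<and>
     (\<forall>g\<in>G. g \<noteq> \<one>\<^bsub>Symp \<rho>\<^esub> \<longrightarrow> finite (Fix g) \<and> card (Fix g) = 2)"

end

theory Submission
  imports Defs
begin

lemma tan_unique:
  fixes A B :: "real^3 \<Rightarrow> 'b::real_normed_vector"
  assumes a: "a \<in> S2" and u: "u \<bullet> a = 0"
  and dA: "(A has_derivative A') (at a)" and dB: "(B has_derivative B') (at a)"
  and eq: "\<And>x. x \<in> S2 \<Longrightarrow> A x = B x"
  shows "A' u = B' u"
proof (cases "u = 0")
  case True
  have "linear A'" "linear B'" using dA dB has_derivative_linear by blast+
  then show ?thesis using True by (simp add: linear_0)
next
  case False
  define e where "e = u /\<^sub>R norm u"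
  have ne: "e \<bullet> e = 1" using False by (simp add: e_def inner_commute dot_square_norm power2_eq_square)
  have ea: "e \<bullet> a = 0" using u by (simp add: e_def)
  have aa: "a \<bullet> a = 1" using a by (simp add: dot_square_norm)
  define \<gamma> where "\<gamma> = (\<lambda>t::real. cos t *\<^sub>R a + sin t *\<^sub>R e)"
  have \<gamma>S: "\<gamma> t \<in> S2" for t
  proof -
    have "\<gamma> t \<bullet> \<gamma> t = (cos t)^2 * (a \<bullet> a) + 2 * cos t * sin t * (e \<bullet> a) + (sin t)^2 * (e \<bullet> e)"
      by (simp add: \<gamma>_def inner_add_left inner_add_right inner_commute power2_eq_square algebra_simps)
    also have "\<dots> = 1" using ne ea aa by simp
    finally show ?thesis by (simp add: dot_square_norm norm_eq_1)
  qed
  have "(\<gamma> has_vector_derivative (- sin 0 *\<^sub>R a + cos 0 *\<^sub>R e)) (at 0)"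
    unfolding \<gamma>_def by (auto intro!: derivative_eq_intros)
  then have dg: "(\<gamma> has_derivative (\<lambda>t. t *\<^sub>R e)) (at 0)"
    by (simp add: has_vector_derivative_def)
  have g0: "\<gamma> 0 = a" by (simp add: \<gamma>_def)
  have dA': "((A \<circ> \<gamma>) has_derivative (A' \<circ> (\<lambda>t. t *\<^sub>R e))) (at 0)"
    using has_derivative_compose[OF dg] dA g0 by (simp add: o_def)
  have dB': "((A \<circ> \<gamma>) has_derivative (B' \<circ> (\<lambda>t. t *\<^sub>R e))) (at 0)"
  proof -
    have "((B \<circ> \<gamma>) has_derivative (B' \<circ> (\<lambda>t. t *\<^sub>R e))) (at 0)"
      using has_derivative_compose[OF dg] dB g0 by (simp add: o_def)
    moreover have "B \<circ> \<gamma> = A \<circ> \<gamma>" using eq \<gamma>S by (auto simp: fun_eq_iff)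
    ultimately show ?thesis by simp
  qed
  have "A' \<circ> (\<lambda>t. t *\<^sub>R e) = B' \<circ> (\<lambda>t. t *\<^sub>R e)"
    using has_derivative_unique[OF dA' dB'] .
  then have Ae: "A' e = B' e" by (metis (no_types, lifting) comp_apply scaleR_one)
  have "u = norm u *\<^sub>R e" using False by (simp add: e_def)
  moreover have "linear A'" "linear B'" using dA dB has_derivative_linear by blast+
  ultimately show ?thesis using Ae by (metis linear_scale)
qed


lemma ext_deriv:
  assumes "smooth_ext U F f" "x \<in> U"
  shows "(F has_derivative frechet_derivative F (at x)) (at x)"
proof -
  have "Ck_on (Suc 0) U F" using assms(1) by (simp add: smooth_ext_def smooth_on_def)
  then have "F differentiable_on U" by simp
  moreover have "open U" using assms(1) by (simp add: smooth_ext_def)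
  ultimately have "F differentiable (at x)" using assms(2) differentiable_on_eq_differentiable_at by blast
  then show ?thesis using frechet_derivative_works by blast
qed

lemma ext_cont:
  assumes "smooth_ext U F f"
  shows "continuous_on U (\<lambda>x. frechet_derivative F (at x) v)"
proof -
  have "Ck_on (Suc 0) U F" using assms(1) by (simp add: smooth_ext_def smooth_on_def)
  then show ?thesis by simp
qed

lemma ext_U: "smooth_ext U F f \<Longrightarrow> x \<in> S2 \<Longrightarrow> x \<in> U"
  by (auto simp: smooth_ext_def)

lemma ext_eq: "smooth_ext U F f \<Longrightarrow> x \<in> S2 \<Longrightarrow> F x = f x"
  by (auto simp: smooth_ext_def)

lemma tangent_pres:
  assumes ext: "smooth_ext U F f" and fS: "\<And>x. x \<in> S2 \<Longrightarrow> f x \<in> S2"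
    and a: "a \<in> S2" and fa: "f a = a" and u: "u \<bullet> a = 0"
  shows "frechet_derivative F (at a) u \<bullet> a = 0"
proof -
  define D where "D = frechet_derivative F (at a)"
  have dF: "(F has_derivative D) (at a)" using ext_deriv[OF ext ext_U[OF ext a]] by (simp add: D_def)
  have Fa: "F a = a" using ext_eq[OF ext a] fa by simp
  have dA: "((\<lambda>x. F x \<bullet> F x) has_derivative (\<lambda>h. F a \<bullet> D h + D h \<bullet> F a)) (at a)"
    by (rule has_derivative_inner[OF dF dF])
  have dB: "((\<lambda>x. 1::real) has_derivative (\<lambda>h. 0)) (at a)" by simp
  have "F a \<bullet> D u + D u \<bullet> F a = 0"
    apply (rule tan_unique[OF a u dA dB])
    using ext_eq[OF ext] fS by (simp add: dot_square_norm)
  then show ?thesis using Fa by (simp add: D_def inner_commute)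
qed

lemma invol_deriv:
  assumes ext: "smooth_ext U F f" and fS: "\<And>x. x \<in> S2 \<Longrightarrow> f x \<in> S2"
    and ff: "\<And>x. x \<in> S2 \<Longrightarrow> f (f x) = x"
    and a: "a \<in> S2" and fa: "f a = a" and u: "u \<bullet> a = 0"
  shows "frechet_derivative F (at a) (frechet_derivative F (at a) u) = u"
proof -
  define D where "D = frechet_derivative F (at a)"
  have dF: "(F has_derivative D) (at a)" using ext_deriv[OF ext ext_U[OF ext a]] by (simp add: D_def)
  have Fa: "F a = a" using ext_eq[OF ext a] fa by simp
  have dA: "((F \<circ> F) has_derivative (D \<circ> D)) (at a)"
    using has_derivative_compose[OF dF, of F D] dF Fa by (simp add: o_def)
  have dB: "((\<lambda>x. x) has_derivative (\<lambda>h. h)) (at a)" by simp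
  have "(D \<circ> D) u = u"
    apply (rule tan_unique[OF a u dA dB])
    using ext_eq[OF ext] fS ff by simp
  then show ?thesis by (simp add: D_def)
qed

lemma comp_deriv:
  assumes extk: "smooth_ext Uk K k" and extg: "smooth_ext Ug G g" and extq: "smooth_ext Uq Q q"
    and q: "\<And>x. x \<in> S2 \<Longrightarrow> q x = k (g x)" and gS: "\<And>x. x \<in> S2 \<Longrightarrow> g x \<in> S2"
    and a: "a \<in> S2" and ga: "g a = a" and u: "u \<bullet> a = 0"
  shows "frechet_derivative Q (at a) u = frechet_derivative K (at a) (frechet_derivative G (at a) u)"
proof -
  have dG: "(G has_derivative frechet_derivative G (at a)) (at a)" using ext_deriv[OF extg ext_U[OF extg a]] .
  have dK: "(K has_derivative frechet_derivative K (at a)) (at a)" using ext_deriv[OF extk ext_U[OF extk a]] .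
  have dQ: "(Q has_derivative frechet_derivative Q (at a)) (at a)" using ext_deriv[OF extq ext_U[OF extq a]] .
  have Ga: "G a = a" using ext_eq[OF extg a] ga by simp
  have dB: "((K \<circ> G) has_derivative (frechet_derivative K (at a) \<circ> frechet_derivative G (at a))) (at a)"
    using has_derivative_compose[OF dG, of K] dK Ga by (simp add: o_def)
  have "frechet_derivative Q (at a) u = (frechet_derivative K (at a) \<circ> frechet_derivative G (at a)) u"
    apply (rule tan_unique[OF a u dQ dB])
    using ext_eq[OF extq] ext_eq[OF extk] ext_eq[OF extg] gS q by simp
  then show ?thesis by simp
qed


lemma unit_tangent_exists:
  fixes a :: "real^3"
  obtains e where "e \<bullet> e = 1" "e \<bullet> a = 0"
proof -
  obtain y :: "real^3" where y: "y \<noteq> 0" "orthogonal a y"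
    using orthogonal_to_vector_exists[of a] by auto
  define e where "e = y /\<^sub>R norm y"
  have "e \<bullet> e = 1" using y by (simp add: e_def dot_square_norm power2_eq_square)
  moreover have "e \<bullet> a = 0" using y by (simp add: e_def orthogonal_def inner_commute)
  ultimately show ?thesis using that by blast
qed

lemma S2_near_infinite:
  assumes a: "a \<in> S2" and d: "d > 0"
  shows "infinite {x \<in> S2. dist x a < d}"
proof -
  obtain e where ne: "e \<bullet> e = 1" and ea: "e \<bullet> a = 0" using unit_tangent_exists by blast
  have aa: "a \<bullet> a = 1" using a by (simp add: dot_square_norm)
  define \<gamma> where "\<gamma> = (\<lambda>t::real. cos t *\<^sub>R a + sin t *\<^sub>R e)"
  have \<gamma>S: "\<gamma> t \<in> S2" for t
  proof -
    have "\<gamma> t \<bullet> \<gamma> t = (cos t)^2 * (a \<bullet> a) + 2 * cos t * sin t * (e \<bullet> a) + (sin t)^2 * (e \<bullet> e)"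
      by (simp add: \<gamma>_def inner_add_left inner_add_right inner_commute power2_eq_square algebra_simps)
    also have "\<dots> = 1" using ne ea aa by simp
    finally show ?thesis by (simp add: dot_square_norm norm_eq_1)
  qed
  have ga: "\<gamma> t \<bullet> a = cos t" for t using ea aa by (simp add: \<gamma>_def inner_add_left)
  have "continuous (at 0) \<gamma>" unfolding \<gamma>_def by (intro continuous_intros)
  then obtain \<eta> where eta: "\<eta> > 0" "\<And>t. dist t 0 < \<eta> \<Longrightarrow> dist (\<gamma> t) (\<gamma> 0) < d"
    using d unfolding continuous_at_eps_delta by blast
  have g0: "\<gamma> 0 = a" by (simp add: \<gamma>_def)
  define T where "T = {0<..<min \<eta> pi}"
  have "inj_on \<gamma> T"
  proof
    fix s t assume "s \<in> T" "t \<in> T" "\<gamma> s = \<gamma> t"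
    then have "cos s = cos t" using ga by metis
    then show "s = t" using \<open>s \<in> T\<close> \<open>t \<in> T\<close> cos_inj_pi by (auto simp: T_def)
  qed
  moreover have "infinite T" using eta pi_gt_zero by (simp add: T_def)
  ultimately have "infinite (\<gamma> ` T)" using finite_imageD by blast
  moreover have "\<gamma> ` T \<subseteq> {x \<in> S2. dist x a < d}"
    using \<gamma>S eta g0 by (auto simp: T_def dist_real_def)
  ultimately show ?thesis using finite_subset by blast
qed


lemma linearization:
  assumes ext: "smooth_ext U F f" and fS: "\<And>x. x \<in> S2 \<Longrightarrow> f x \<in> S2"
    and ff: "\<And>x. x \<in> S2 \<Longrightarrow> f (f x) = x"
    and a: "a \<in> S2" and fa: "f a = a"
    and T1: "\<And>u. u \<bullet> a = 0 \<Longrightarrow> frechet_derivative F (at a) u = u"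
  shows "infinite {x \<in> S2. f x = x}"
proof -
  define D where "D = (\<lambda>z. frechet_derivative F (at z))"
  have oU: "open U" using ext by (simp add: smooth_ext_def)
  have aU: "a \<in> U" using ext_U[OF ext a] .
  have dF: "\<And>z. z \<in> U \<Longrightarrow> (F has_derivative D z) (at z)" using ext_deriv[OF ext] by (simp add: D_def)
  have linD: "\<And>z. z \<in> U \<Longrightarrow> linear (D z)" using dF has_derivative_linear by blast
  have aa: "a \<bullet> a = 1" using a by (simp add: dot_square_norm)
  define v where "v = (1/2) *\<^sub>R (a - D a a)"
  define \<Psi> where "\<Psi> = (\<lambda>x. x + F x + (x \<bullet> x - 1) *\<^sub>R v)"
  define \<Psi>' where "\<Psi>' = (\<lambda>z w. w + D z w + (z \<bullet> w + w \<bullet> z) *\<^sub>R v)"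
  have d\<Psi>: "(\<Psi> has_derivative \<Psi>' z) (at z)" if "z \<in> U" for z
    unfolding \<Psi>_def \<Psi>'_def
    by (auto intro!: derivative_eq_intros dF[OF that])
  have \<Psi>'a: "\<Psi>' a w = 2 *\<^sub>R w" for w
  proof -
    define s where "s = w \<bullet> a"
    define t where "t = w - s *\<^sub>R a"
    have ta: "t \<bullet> a = 0" using aa by (simp add: t_def s_def inner_diff_left)
    have w: "w = t + s *\<^sub>R a" by (simp add: t_def)
    have "D a w = D a t + s *\<^sub>R D a a" using linD[OF aU] w by (metis linear_add linear_scale)
    also have "\<dots> = t + s *\<^sub>R D a a" using T1[OF ta] by (simp add: D_def)
    finally have Dw: "D a w = t + s *\<^sub>R D a a" .
    have "\<Psi>' a w = w + D a w + (2 * s) *\<^sub>R v" by (simp add: \<Psi>'_def s_def inner_commute)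
    also have "\<dots> = 2 *\<^sub>R w" using w Dw by (simp add: v_def vec_eq_iff algebra_simps)
    finally show ?thesis .
  qed
  obtain r where r: "r > 0" "ball a r \<subseteq> U" "inj_on \<Psi> (ball a r)"
  proof (rule has_derivative_locally_injective[OF aU oU, of "\<lambda>w. (1/2) *\<^sub>R w" \<Psi>'])
    show "bounded_linear (\<lambda>w. (1/2::real) *\<^sub>R w)" by (simp add: bounded_linear_scaleR_right)
    show "(\<lambda>w. (1/2::real) *\<^sub>R w) \<circ> \<Psi>' a = id" by (auto simp: \<Psi>'a fun_eq_iff)
    show "\<And>x. x \<in> U \<Longrightarrow> (\<Psi> has_derivative \<Psi>' x) (at x)" using d\<Psi> .
    fix e :: real assume e: "e > 0"
    define \<phi> where "\<phi> = (\<lambda>z. \<Sum>i\<in>Basis. norm (D z i - D a i + (2 * ((z - a) \<bullet> i)) *\<^sub>R v))"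
    have "continuous_on U \<phi>" unfolding \<phi>_def D_def
      by (intro continuous_intros ext_cont[OF ext])
    then have "continuous (at a) \<phi>" using aU oU continuous_on_eq_continuous_at by blast
    moreover have "\<phi> a = 0" by (simp add: \<phi>_def)
    ultimately obtain d1 where d1: "d1 > 0" "\<And>z. dist z a < d1 \<Longrightarrow> \<phi> z < e"
      using e unfolding continuous_at_eps_delta by (metis dist_real_def abs_less_iff diff_zero)
    obtain d2 where d2: "d2 > 0" "ball a d2 \<subseteq> U" using aU oU open_contains_ball by blast
    show "\<exists>d>0. \<forall>x. dist a x < d \<longrightarrow> onorm (\<lambda>v. \<Psi>' x v - \<Psi>' a v) < e"
    proof (intro exI[of _ "min d1 d2"] conjI allI impI)
      show "min d1 d2 > 0" using d1 d2 by simp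
      fix z assume z: "dist a z < min d1 d2"
      then have zU: "z \<in> U" using d2 by auto
      have eq: "(\<lambda>w. \<Psi>' z w - \<Psi>' a w) = (\<lambda>w. D z w - D a w + (2 * ((z - a) \<bullet> w)) *\<^sub>R v)"
        by (auto simp: \<Psi>'_def fun_eq_iff inner_commute inner_diff_left algebra_simps)
      have bl: "bounded_linear (\<lambda>w. D z w - D a w + (2 * ((z - a) \<bullet> w)) *\<^sub>R v)"
        using has_derivative_bounded_linear[OF dF[OF zU]] has_derivative_bounded_linear[OF dF[OF aU]]
        by (intro bounded_linear_add bounded_linear_sub
              bounded_linear_compose[OF bounded_linear_scaleR_left[of v]
                bounded_linear_const_mult[OF bounded_linear_inner_right[of "z-a"], of 2], simplified]) auto
      have "onorm (\<lambda>w. \<Psi>' z w - \<Psi>' a w) \<le> \<phi> z"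
        unfolding eq \<phi>_def by (rule onorm_componentwise[OF bl])
      also have "\<phi> z < e" using d1 z by (simp add: dist_commute)
      finally show "onorm (\<lambda>w. \<Psi>' z w - \<Psi>' a w) < e" .
    qed
  qed
  have Fa: "F a = a" using ext_eq[OF ext a] fa by simp
  have "continuous (at a) F" using dF[OF aU] has_derivative_continuous by blast
  then obtain \<delta> where \<delta>: "\<delta> > 0" "\<And>x. dist x a < \<delta> \<Longrightarrow> dist (F x) (F a) < r"
    using r(1) unfolding continuous_at_eps_delta by blast
  have "{x \<in> S2. dist x a < min \<delta> r} \<subseteq> {x \<in> S2. f x = x}"
  proof safe
    fix x assume x: "x \<in> S2" "dist x a < min \<delta> r"
    have xb: "x \<in> ball a r" using x by (simp add: dist_commute)
    have fxb: "f x \<in> ball a r" using \<delta>(2)[of x] x ext_eq[OF ext x(1)] Fa by (simp add: dist_commute)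
    have xx: "x \<bullet> x = 1" using x by (simp add: dot_square_norm)
    have fxfx: "f x \<bullet> f x = 1" using fS[OF x(1)] by (simp add: dot_square_norm)
    have "\<Psi> x = x + f x" using xx ext_eq[OF ext x(1)] by (simp add: \<Psi>_def)
    moreover have "\<Psi> (f x) = f x + x" using fxfx ext_eq[OF ext fS[OF x(1)]] ff[OF x(1)] by (simp add: \<Psi>_def)
    ultimately have "\<Psi> (f x) = \<Psi> x" by simp
    then show "f x = x" using r(3) xb fxb by (meson inj_onD)
  qed
  then show ?thesis using S2_near_infinite[OF a, of "min \<delta> r"] \<delta>(1) r(1) finite_subset by auto
qed


lemma cross_tangent_zero:
  fixes a e1 e2 :: "real^3"
  assumes "e1 \<bullet> a = 0" "e2 \<bullet> a = 0" "a \<bullet> a = 1" "a \<bullet> (cross3 e1 e2) = 0"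
  shows "cross3 e1 e2 = 0"
proof -
  define w where "w = cross3 e1 e2"
  have i1: "cross3 a w = (a \<bullet> e2) *\<^sub>R e1 - (a \<bullet> e1) *\<^sub>R e2"
    unfolding w_def by (simp add: cross3_simps forall_3)
  have i2: "cross3 a (cross3 a w) = (a \<bullet> w) *\<^sub>R a - (a \<bullet> a) *\<^sub>R w"
    by (simp add: cross3_simps forall_3)
  have "cross3 a w = 0" using i1 assms(1,2) by (simp add: inner_commute)
  then show ?thesis using i2 assms(3,4) by (simp add: w_def)
qed

lemma minus_id:
  assumes ext: "smooth_ext U F f" and fS: "\<And>x. x \<in> S2 \<Longrightarrow> f x \<in> S2"
    and ff: "\<And>x. x \<in> S2 \<Longrightarrow> f (f x) = x"
    and a: "a \<in> S2" and fa: "f a = a" and fin: "finite {x \<in> S2. f x = x}"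
    and det: "\<And>u v. u \<bullet> a = 0 \<Longrightarrow> v \<bullet> a = 0 \<Longrightarrow>
       a \<bullet> cross3 (frechet_derivative F (at a) u) (frechet_derivative F (at a) v) = a \<bullet> cross3 u v"
    and u: "u \<bullet> a = 0"
  shows "frechet_derivative F (at a) u = - u"
proof (rule ccontr)
  assume nu: "frechet_derivative F (at a) u \<noteq> - u"
  define D where "D = frechet_derivative F (at a)"
  have lin: "linear D" using ext_deriv[OF ext ext_U[OF ext a]] has_derivative_linear by (simp add: D_def)
  have aa: "a \<bullet> a = 1" using a by (simp add: dot_square_norm)
  obtain v where v: "v \<bullet> a = 0" "D v \<noteq> v"
    using linearization[OF ext fS ff a fa] fin by (auto simp: D_def)
  have tp: "\<And>w. w \<bullet> a = 0 \<Longrightarrow> D w \<bullet> a = 0" using tangent_pres[OF ext fS a fa] by (simp add: D_def)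
  have DD: "\<And>w. w \<bullet> a = 0 \<Longrightarrow> D (D w) = w" using invol_deriv[OF ext fS ff a fa] by (simp add: D_def)
  define e1 where "e1 = u + D u"
  define e2 where "e2 = v - D v"
  have e1n: "e1 \<noteq> 0" using nu by (auto simp: e1_def D_def add_eq_0_iff)
  have e2n: "e2 \<noteq> 0" using v by (simp add: e2_def)
  have e1a: "e1 \<bullet> a = 0" using u tp by (simp add: e1_def inner_add_left)
  have e2a: "e2 \<bullet> a = 0" using v tp by (simp add: e2_def inner_diff_left)
  have De1: "D e1 = e1" using DD[OF u] lin by (simp add: e1_def linear_add)
  have De2: "D e2 = - e2" using DD[OF v(1)] lin by (simp add: e2_def linear_diff)
  have "a \<bullet> cross3 e1 (- e2) = a \<bullet> cross3 e1 e2" using det[OF e1a e2a] De1 De2 by (simp add: D_def)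
  then have "a \<bullet> cross3 e1 e2 = 0" by simp
  then have "cross3 e1 e2 = 0" using cross_tangent_zero e1a e2a aa by blast
  then have "collinear {0, e1, e2}" using cross_eq_0 by blast
  then obtain c where c: "e2 = c *\<^sub>R e1" using e1n e2n collinear_lemma by blast
  then have "D e2 = e2" using De1 lin by (simp add: linear_scale)
  then have "e2 = - e2" using De2 by simp
  then show False using e2n by (simp add: vec_eq_iff)
qed


lemma carrier_Symp_D:
  assumes "f \<in> carrier (Symp \<rho>)"
  shows "f \<in> extensional S2" "bij_betw f S2 S2" "preserves_form \<rho> f"
  using assms by (auto simp: Symp_def diffeo_S2_def)

lemma pf_at_fixed:
  assumes "preserves_form \<rho> f" "volume_density \<rho>" "a \<in> S2" "f a = a"
  obtains U F where "smooth_ext U F f"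
    "\<And>u v. u \<bullet> a = 0 \<Longrightarrow> v \<bullet> a = 0 \<Longrightarrow>
       a \<bullet> cross3 (frechet_derivative F (at a) u) (frechet_derivative F (at a) v) = a \<bullet> cross3 u v"
proof -
  obtain U F where ext: "smooth_ext U F f" and pf: "\<forall>x\<in>S2. \<forall>u v. u \<bullet> x = 0 \<longrightarrow> v \<bullet> x = 0 \<longrightarrow>
        \<rho> (f x) * (f x \<bullet> cross3 (frechet_derivative F (at x) u) (frechet_derivative F (at x) v))
        = \<rho> x * (x \<bullet> cross3 u v)"
    using assms(1) unfolding preserves_form_def by blast
  have "\<rho> a \<noteq> 0" using assms(2,3) by (simp add: volume_density_def)
  show ?thesis
  proof (rule that[OF ext])
    fix u v :: "real^3" assume "u \<bullet> a = 0" "v \<bullet> a = 0"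
    then have "\<rho> (f a) * (f a \<bullet> cross3 (frechet_derivative F (at a) u) (frechet_derivative F (at a) v))
        = \<rho> a * (a \<bullet> cross3 u v)" using pf assms(3) by blast
    then have "\<rho> a * (a \<bullet> cross3 (frechet_derivative F (at a) u) (frechet_derivative F (at a) v))
        = \<rho> a * (a \<bullet> cross3 u v)" using assms(4) by simp
    then show "a \<bullet> cross3 (frechet_derivative F (at a) u) (frechet_derivative F (at a) v) = a \<bullet> cross3 u v"
      using \<open>\<rho> a \<noteq> 0\<close> by simp
  qed
qed

lemma same_fix_eq:
  assumes vd: "volume_density \<rho>"
    and kC: "k \<in> carrier (Symp \<rho>)" and gC: "g \<in> carrier (Symp \<rho>)" and qC: "compose S2 k g \<in> carrier (Symp \<rho>)"
    and kk: "\<And>x. x \<in> S2 \<Longrightarrow> k (k x) = x" and gg: "\<And>x. x \<in> S2 \<Longrightarrow> g (g x) = x"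
    and kg: "\<And>x. x \<in> S2 \<Longrightarrow> k (g x) = g (k x)"
    and fk: "finite (Fix k)" and fg: "finite (Fix g)"
    and fq: "compose S2 k g \<noteq> restrict id S2 \<Longrightarrow> finite (Fix (compose S2 k g))"
    and a: "a \<in> S2" and ka: "k a = a" and ga: "g a = a"
  shows "k = g"
proof -
  define q where "q = compose S2 k g"
  have kS: "\<And>x. x \<in> S2 \<Longrightarrow> k x \<in> S2" using carrier_Symp_D(2)[OF kC] bij_betwE by blast
  have gS: "\<And>x. x \<in> S2 \<Longrightarrow> g x \<in> S2" using carrier_Symp_D(2)[OF gC] bij_betwE by blast
  have qx: "\<And>x. x \<in> S2 \<Longrightarrow> q x = k (g x)" by (simp add: q_def compose_def)
  have qS: "\<And>x. x \<in> S2 \<Longrightarrow> q x \<in> S2" using qx kS gS by simp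
  have qq: "\<And>x. x \<in> S2 \<Longrightarrow> q (q x) = x"
  proof -
    fix x assume x: "x \<in> S2"
    have "q (q x) = k (g (k (g x)))" using qx qS x gS kS by simp
    also have "\<dots> = k (k (g (g x)))" using kg gS x by simp
    also have "\<dots> = x" using kk gg gS x by simp
    finally show "q (q x) = x" .
  qed
  have qa: "q a = a" using qx a ka ga by simp
  obtain Uk K where extk: "smooth_ext Uk K k" and detk: "\<And>u v. u \<bullet> a = 0 \<Longrightarrow> v \<bullet> a = 0 \<Longrightarrow>
       a \<bullet> cross3 (frechet_derivative K (at a) u) (frechet_derivative K (at a) v) = a \<bullet> cross3 u v"
    by (rule pf_at_fixed[OF carrier_Symp_D(3)[OF kC] vd a ka]) (rule that)
  obtain Ug G where extg: "smooth_ext Ug G g" and detg: "\<And>u v. u \<bullet> a = 0 \<Longrightarrow> v \<bullet> a = 0 \<Longrightarrow>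
       a \<bullet> cross3 (frechet_derivative G (at a) u) (frechet_derivative G (at a) v) = a \<bullet> cross3 u v"
    by (rule pf_at_fixed[OF carrier_Symp_D(3)[OF gC] vd a ga]) (rule that)
  obtain Uq Q where extq: "smooth_ext Uq Q q"
    using carrier_Symp_D(3)[OF qC[folded q_def]] unfolding preserves_form_def by blast
  have Dk: "\<And>u. u \<bullet> a = 0 \<Longrightarrow> frechet_derivative K (at a) u = - u"
    using fk by (intro minus_id[OF extk kS kk a ka _ detk]) (simp_all add: Fix_def)
  have Dg: "\<And>u. u \<bullet> a = 0 \<Longrightarrow> frechet_derivative G (at a) u = - u"
    using fg by (intro minus_id[OF extg gS gg a ga _ detg]) (simp_all add: Fix_def)
  have linK: "linear (frechet_derivative K (at a))"
    using ext_deriv[OF extk ext_U[OF extk a]] has_derivative_linear by blast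
  have Dq: "frechet_derivative Q (at a) u = u" if u: "u \<bullet> a = 0" for u
  proof -
    have "frechet_derivative Q (at a) u = frechet_derivative K (at a) (frechet_derivative G (at a) u)"
      by (rule comp_deriv[OF extk extg extq qx gS a ga u])
    also have "\<dots> = frechet_derivative K (at a) (- u)" using Dg[OF u] by simp
    also have "\<dots> = - frechet_derivative K (at a) u" using linK by (simp add: linear_neg)
    also have "\<dots> = u" using Dk[OF u] by simp
    finally show ?thesis .
  qed
  have "q = restrict id S2"
  proof (rule ccontr)
    assume "q \<noteq> restrict id S2"
    then have "finite (Fix q)" using fq by (simp add: q_def)
    moreover have "infinite {x \<in> S2. q x = x}" using linearization[OF extq qS qq a qa Dq] by blast
    ultimately show False by (simp add: Fix_def)
  qed
  then have q1: "\<And>x. x \<in> S2 \<Longrightarrow> k (g x) = x" using qx by (simp add: fun_eq_iff)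
  show "k = g"
  proof (rule extensionalityI[OF carrier_Symp_D(1)[OF kC] carrier_Symp_D(1)[OF gC]])
    fix x assume x: "x \<in> S2"
    have "k x = k (g (g x))" using gg x by simp
    also have "\<dots> = g x" using q1 gS x by simp
    finally show "k x = g x" .
  qed
qed


theorem lemma5p9:
  fixes \<rho> :: "real^3 \<Rightarrow> real" and G :: "(real^3 \<Rightarrow> real^3) set"
  assumes "volume_density \<rho>"
    and "pseudo_rotation_group \<rho> G"
    and "\<forall>g\<in>G. \<forall>h\<in>G. g \<otimes>\<^bsub>Symp \<rho>\<^esub> h = h \<otimes>\<^bsub>Symp \<rho>\<^esub> g"
  shows "(\<exists>F. \<forall>g\<in>G. g \<noteq> \<one>\<^bsub>Symp \<rho>\<^esub> \<longrightarrow> Fix g = F)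
       \<or> ((Symp \<rho>)\<lparr>carrier := G\<rparr> \<cong> DirProd (integer_mod_group 2) (integer_mod_group 2)
          \<and> (\<forall>g\<in>G. \<forall>h\<in>G. g \<noteq> \<one>\<^bsub>Symp \<rho>\<^esub> \<longrightarrow> h \<noteq> \<one>\<^bsub>Symp \<rho>\<^esub> \<longrightarrow> g \<noteq> h
                \<longrightarrow> Fix g \<inter> Fix h = {})
          \<and> finite (\<Union>g\<in>G - {\<one>\<^bsub>Symp \<rho>\<^esub>}. Fix g)
          \<and> card (\<Union>g\<in>G - {\<one>\<^bsub>Symp \<rho>\<^esub>}. Fix g) = 6)"
proof -
  define I where "I = restrict id S2"
  have one: "\<one>\<^bsub>Symp \<rho>\<^esub> = I" by (simp add: Symp_def I_def)
  have mult: "\<And>g h. g \<otimes>\<^bsub>Symp \<rho>\<^esub> h = compose S2 g h" by (simp add: Symp_def)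
  have sub: "subgroup G (Symp \<rho>)" using assms(2) by (simp add: pseudo_rotation_group_def)
  have card2: "\<And>g. g \<in> G \<Longrightarrow> g \<noteq> I \<Longrightarrow> finite (Fix g) \<and> card (Fix g) = 2"
    using assms(2) one by (auto simp: pseudo_rotation_group_def)
  have GC: "\<And>g. g \<in> G \<Longrightarrow> g \<in> carrier (Symp \<rho>)" using sub subgroup.subset by blast
  have IG: "I \<in> G" using subgroup.one_closed[OF sub] one by simp
  have mG: "\<And>g h. g \<in> G \<Longrightarrow> h \<in> G \<Longrightarrow> compose S2 g h \<in> G"
    using subgroup.m_closed[OF sub] mult by metis
  have comm: "\<And>g h. g \<in> G \<Longrightarrow> h \<in> G \<Longrightarrow> compose S2 g h = compose S2 h g"
    using assms(3) mult by metis
  have extG: "\<And>g. g \<in> G \<Longrightarrow> g \<in> extensional S2" using GC carrier_Symp_D(1) by blast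
  have S: "\<And>g x. g \<in> G \<Longrightarrow> x \<in> S2 \<Longrightarrow> g x \<in> S2"
    using GC carrier_Symp_D(2) bij_betwE by blast
  have inj: "\<And>g x y. g \<in> G \<Longrightarrow> x \<in> S2 \<Longrightarrow> y \<in> S2 \<Longrightarrow> g x = g y \<Longrightarrow> x = y"
    using GC carrier_Symp_D(2) bij_betw_imp_inj_on inj_onD by metis
  have cmp: "\<And>g h x. x \<in> S2 \<Longrightarrow> compose S2 g h x = g (h x)" by (simp add: compose_def)
  have commx: "\<And>g h x. g \<in> G \<Longrightarrow> h \<in> G \<Longrightarrow> x \<in> S2 \<Longrightarrow> g (h x) = h (g x)"
    using comm cmp by metis
  have eqI: "\<And>g h. g \<in> G \<Longrightarrow> h \<in> G \<Longrightarrow> (\<And>x. x \<in> S2 \<Longrightarrow> g x = h x) \<Longrightarrow> g = h"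
    using extG extensionalityI by metis
  have isI: "\<And>g. g \<in> G \<Longrightarrow> (\<And>x. x \<in> S2 \<Longrightarrow> g x = x) \<Longrightarrow> g = I"
    using eqI IG by (simp add: I_def)
  have Ix: "\<And>x. x \<in> S2 \<Longrightarrow> I x = x" by (simp add: I_def)
  have FixS: "\<And>g. Fix g \<subseteq> S2" by (auto simp: Fix_def)
  have claimA: "Fix g \<inter> Fix h = {} \<and> (\<forall>x\<in>Fix g. h x \<in> Fix g \<and> h x \<noteq> x) \<and> (\<forall>x\<in>S2. h (h x) = x)"
    if g: "g \<in> G" "g \<noteq> I" and h: "h \<in> G" "h \<noteq> I" and ne: "Fix g \<noteq> Fix h" for g h
  proof -
    obtain a b where ab: "Fix g = {a,b}" "a \<noteq> b" using card2[OF g] card_2_iff by metis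
    have aS: "a \<in> S2" and bS: "b \<in> S2" using ab FixS by blast+
    have hFix: "h x \<in> Fix g" if x: "x \<in> Fix g" for x
    proof -
      have xS: "x \<in> S2" and gx: "g x = x" using x by (auto simp: Fix_def)
      have "g (h x) = h x" using commx[OF g(1) h(1) xS] gx by simp
      then show ?thesis using S[OF h(1) xS] by (simp add: Fix_def)
    qed
    have ha: "h a \<in> {a,b}" and hb: "h b \<in> {a,b}" using hFix ab by auto
    have nofix: "h a \<noteq> a \<and> h b \<noteq> b"
    proof (rule ccontr)
      assume "\<not> (h a \<noteq> a \<and> h b \<noteq> b)"
      then have "h a = a \<and> h b = b" using ha hb inj[OF h(1) aS bS] ab(2) by auto
      then have "Fix g \<subseteq> Fix h" using ab aS bS by (auto simp: Fix_def)
      then have "Fix g = Fix h" using card2[OF g] card2[OF h] by (simp add: card_subset_eq)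
      then show False using ne by simp
    qed
    have hab: "h a = b" "h b = a" using nofix ha hb by auto
    have disj: "Fix g \<inter> Fix h = {}" using ab hab by (auto simp: Fix_def)
    define hh where "hh = compose S2 h h"
    have hhG: "hh \<in> G" using mG[OF h(1) h(1)] by (simp add: hh_def)
    have hhx: "\<And>x. hh x = (if x \<in> S2 then h (h x) else undefined)" by (simp add: hh_def compose_def)
    have sub2: "Fix g \<union> Fix h \<subseteq> Fix hh"
      using ab hab aS bS by (auto simp: Fix_def hhx)
    have "hh = I"
    proof (rule ccontr)
      assume "hh \<noteq> I"
      then have c: "finite (Fix hh)" "card (Fix hh) = 2" using card2[OF hhG] by auto
      have "card (Fix g \<union> Fix h) = 4"
        using card2[OF g] card2[OF h] disj by (simp add: card_Un_disjoint)
      moreover have "card (Fix g \<union> Fix h) \<le> card (Fix hh)" using c(1) sub2 card_mono by blast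
      ultimately show False using c(2) by simp
    qed
    then have "\<forall>x\<in>S2. h (h x) = x" using hhx Ix by metis
    then show ?thesis using disj ab hab by auto
  qed
  show ?thesis
  proof (cases "\<forall>g\<in>G. \<forall>h\<in>G. g \<noteq> I \<longrightarrow> h \<noteq> I \<longrightarrow> Fix g = Fix h")
    case True
    define g0 where "g0 = (SOME g. g \<in> G \<and> g \<noteq> I)"
    have "\<forall>g\<in>G. g \<noteq> I \<longrightarrow> Fix g = Fix g0"
    proof (intro ballI impI)
      fix g assume "g \<in> G" "g \<noteq> I"
      then have "g0 \<in> G \<and> g0 \<noteq> I" unfolding g0_def using someI[of "\<lambda>g. g \<in> G \<and> g \<noteq> I" g] by blast
      then show "Fix g = Fix g0" using True \<open>g \<in> G\<close> \<open>g \<noteq> I\<close> by blast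
    qed
    then show ?thesis using one by auto
  next
    case False
    then obtain g h where g: "g \<in> G" "g \<noteq> I" and h: "h \<in> G" "h \<noteq> I" and ne: "Fix g \<noteq> Fix h" by blast
    note Agh = claimA[OF g h ne]
    note Ahg = claimA[OF h g ne[symmetric]]
    have gg: "\<And>x. x \<in> S2 \<Longrightarrow> g (g x) = x" using Ahg by blast
    have hh: "\<And>x. x \<in> S2 \<Longrightarrow> h (h x) = x" using Agh by blast
    define p where "p = compose S2 g h"
    have pG: "p \<in> G" using mG[OF g(1) h(1)] by (simp add: p_def)
    have px: "\<And>x. x \<in> S2 \<Longrightarrow> p x = g (h x)" by (simp add: p_def compose_def)
    have pI: "p \<noteq> I"
    proof
      assume "p = I"
      then have "\<And>x. x \<in> S2 \<Longrightarrow> g (h x) = x" using px Ix by metis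
      then have "\<And>x. x \<in> S2 \<Longrightarrow> h x = g x" using gg S[OF h(1)] by metis
      then have "h = g" using eqI[OF h(1) g(1)] by blast
      then show False using ne by simp
    qed
    obtain a where a: "a \<in> Fix g" using card2[OF g] by (metis card.empty ex_in_conv zero_neq_numeral)
    obtain c where c: "c \<in> Fix h" using card2[OF h] by (metis card.empty ex_in_conv zero_neq_numeral)
    have aS: "a \<in> S2" and cS: "c \<in> S2" using a c FixS by blast+
    have ne_gp: "Fix g \<noteq> Fix p"
    proof -
      have "p a = h a" using px[OF aS] Agh a by (simp add: Fix_def)
      then have "a \<notin> Fix p" using Agh a by (simp add: Fix_def)
      then show ?thesis using a by blast
    qed
    have ne_hp: "Fix h \<noteq> Fix p"
    proof -
      have "p c = g c" using px[OF cS] c by (simp add: Fix_def)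
      then have "c \<notin> Fix p" using Ahg c by (simp add: Fix_def)
      then show ?thesis using c by blast
    qed
    note Agp = claimA[OF g pG pI ne_gp]
    note Ahp = claimA[OF h pG pI ne_hp]
    have pp: "\<And>x. x \<in> S2 \<Longrightarrow> p (p x) = x" using Agp by blast
    have inv3: "\<And>x y. x \<in> {g,h,p} \<Longrightarrow> y \<in> S2 \<Longrightarrow> x (x y) = y" using gg hh pp by auto
    have nI3: "\<And>x. x \<in> {g,h,p} \<Longrightarrow> x \<in> G \<and> x \<noteq> I" using g h pG pI by auto
    have other: "\<And>x. x \<in> {g,h,p} \<Longrightarrow> \<exists>y\<in>{g,h,p}. Fix y \<noteq> Fix x" using ne ne_gp by auto
    have U: "k = x" if k: "k \<in> G" "k \<noteq> I" and x: "x \<in> {g,h,p}" and m: "Fix k \<inter> Fix x \<noteq> {}" for k x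
    proof -
      have xG: "x \<in> G" "x \<noteq> I" using nI3[OF x] by auto
      have fx: "Fix x = Fix k"
      proof (rule ccontr)
        assume "Fix x \<noteq> Fix k"
        then show False using claimA[OF xG k] m by blast
      qed
      obtain y where y: "y \<in> {g,h,p}" "Fix y \<noteq> Fix x" using other[OF x] by blast
      have yG: "y \<in> G" "y \<noteq> I" using nI3[OF y(1)] by auto
      have kk: "\<And>z. z \<in> S2 \<Longrightarrow> k (k z) = z" using claimA[OF yG k] y(2) fx by auto
      obtain a0 where a0: "a0 \<in> Fix k" "a0 \<in> Fix x" using m by blast
      show "k = x"
      proof (rule same_fix_eq[OF assms(1) GC[OF k(1)] GC[OF xG(1)] GC[OF mG[OF k(1) xG(1)]]])
        show "\<And>z. z \<in> S2 \<Longrightarrow> k (k z) = z" by (rule kk)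
        show "\<And>z. z \<in> S2 \<Longrightarrow> x (x z) = z" using inv3[OF x] .
        show "\<And>z. z \<in> S2 \<Longrightarrow> k (x z) = x (k z)" using commx[OF k(1) xG(1)] .
        show "finite (Fix k)" "finite (Fix x)" using card2[OF k] card2[OF xG] by auto
        show "compose S2 k x \<noteq> restrict id S2 \<Longrightarrow> finite (Fix (compose S2 k x))"
          using card2[OF mG[OF k(1) xG(1)]] by (simp add: I_def)
        show "a0 \<in> S2" "k a0 = a0" "x a0 = a0" using a0 by (auto simp: Fix_def)
      qed
    qed
    have Gsub: "k \<in> {I,g,h,p}" if k: "k \<in> G" for k
    proof (cases "k = I")
      case True then show ?thesis by simp
    next
      case kI: False
      show ?thesis
      proof (cases "Fix k \<inter> Fix g \<noteq> {} \<or> Fix k \<inter> Fix h \<noteq> {} \<or> Fix k \<inter> Fix p \<noteq> {}")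
        case True
        then show ?thesis using U[OF k kI] by blast
      next
        case False
        then have dk: "Fix k \<inter> Fix g = {}" "Fix k \<inter> Fix h = {}" "Fix k \<inter> Fix p = {}" by auto
        have "Fix g \<noteq> Fix k" using dk(1) a by blast
        note Agk = claimA[OF g k kI this]
        have ka: "k a \<in> Fix g" "k a \<noteq> a" using Agk a by auto
        have hka: "h (k a) \<in> Fix g" "h (k a) \<noteq> k a" using Agh ka(1) by auto
        have hka_a: "h (k a) = a"
        proof -
          obtain u v where uv: "Fix g = {u,v}" using card2[OF g] card_2_iff by metis
          show ?thesis using uv a ka hka by auto
        qed
        define m where "m = compose S2 h k"
        have mG': "m \<in> G" using mG[OF h(1) k] by (simp add: m_def)
        have mx: "\<And>z. z \<in> S2 \<Longrightarrow> m z = h (k z)" by (simp add: m_def compose_def)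
        have mI: "m \<noteq> I"
        proof
          assume "m = I"
          then have "\<And>z. z \<in> S2 \<Longrightarrow> h (k z) = z" using mx Ix by metis
          then have "\<And>z. z \<in> S2 \<Longrightarrow> k z = h z" using hh S[OF k] by metis
          then have "k = h" using eqI[OF k h(1)] by blast
          then show False using dk(2) c by blast
        qed
        have "a \<in> Fix m" using mx[OF aS] hka_a aS by (simp add: Fix_def)
        then have "m = g" using U[OF mG' mI, of g] a by blast
        have "k = p"
        proof (rule eqI[OF k pG])
          fix z assume z: "z \<in> S2"
          have "k z = h (h (k z))" using hh S[OF k z] by simp
          also have "\<dots> = h (g z)" using mx[OF z] \<open>m = g\<close> by simp
          also have "\<dots> = p z" using px[OF z] commx[OF g(1) h(1) z] by simp
          finally show "k z = p z" .
        qed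
        then show ?thesis by simp
      qed
    qed
    have Geq: "G = {I,g,h,p}" using Gsub IG g h pG by blast
    have dist: "I \<noteq> g" "I \<noteq> h" "I \<noteq> p" "g \<noteq> h" "g \<noteq> p" "h \<noteq> p"
      using g h pI ne ne_gp ne_hp by auto
    have cmpeq: "compose S2 x y = z" if "x \<in> G" "y \<in> G" "z \<in> G" "\<And>w. w \<in> S2 \<Longrightarrow> x (y w) = z w" for x y z
      using eqI[OF mG[OF that(1,2)] that(3)] cmp that(4) by metis
    have tI: "compose S2 I x = x" "compose S2 x I = x" if "x \<in> G" for x
      using cmpeq[OF IG that that] cmpeq[OF that IG that] Ix S[OF that] by auto
    have tgg: "compose S2 g g = I" using cmpeq[OF g(1) g(1) IG] gg Ix by simp
    have thh: "compose S2 h h = I" using cmpeq[OF h(1) h(1) IG] hh Ix by simp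
    have tpp: "compose S2 p p = I" using cmpeq[OF pG pG IG] pp Ix by simp
    have tgh: "compose S2 g h = p" by (simp add: p_def)
    have thg: "compose S2 h g = p" using comm[OF g(1) h(1)] by (simp add: p_def)
    have tgp: "compose S2 g p = h" using cmpeq[OF g(1) pG h(1)] px gg S[OF h(1)] by simp
    have tpg: "compose S2 p g = h" using tgp comm[OF g(1) pG] by simp
    have thp: "compose S2 h p = g"
    proof (rule cmpeq[OF h(1) pG g(1)])
      fix w assume w: "w \<in> S2"
      have "h (p w) = h (h (g w))" using px[OF w] commx[OF g(1) h(1) w] by simp
      then show "h (p w) = g w" using hh S[OF g(1) w] by simp
    qed
    have tph: "compose S2 p h = g" using thp comm[OF h(1) pG] by simp
    define \<phi> where "\<phi> = (\<lambda>x. (if x = g \<or> x = p then 1 else 0, if x = h \<or> x = p then 1 else 0) :: int \<times> int)"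
    have \<phi>v: "\<phi> I = (0,0)" "\<phi> g = (1,0)" "\<phi> h = (0,1)" "\<phi> p = (1,1)"
      using dist by (auto simp: \<phi>_def)
    have multG: "\<And>x y. x \<otimes>\<^bsub>(Symp \<rho>)\<lparr>carrier := G\<rparr>\<^esub> y = compose S2 x y" by (simp add: Symp_def)
    have carrG: "carrier ((Symp \<rho>)\<lparr>carrier := G\<rparr>) = G" by simp
    have cZ: "carrier (integer_mod_group 2) = {0,1}" by (auto simp: integer_mod_group_def)
    have mZ: "\<And>x y. x \<otimes>\<^bsub>integer_mod_group 2\<^esub> y = (x + y) mod 2" by (simp add: integer_mod_group_def)
    have cD: "carrier (DirProd (integer_mod_group 2) (integer_mod_group 2)) = {0,1} \<times> {0,1}"
      by (simp add: DirProd_def cZ)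
    have mD: "\<And>x y. x \<otimes>\<^bsub>DirProd (integer_mod_group 2) (integer_mod_group 2)\<^esub> y
        = ((fst x + fst y) mod 2, (snd x + snd y) mod 2)"
      by (simp add: DirProd_def mZ split: prod.split)
    have iso: "\<phi> \<in> iso ((Symp \<rho>)\<lparr>carrier := G\<rparr>) (DirProd (integer_mod_group 2) (integer_mod_group 2))"
    proof -
      have "\<phi> \<in> hom ((Symp \<rho>)\<lparr>carrier := G\<rparr>) (DirProd (integer_mod_group 2) (integer_mod_group 2))"
        unfolding hom_def using tI[OF IG] tI[OF g(1)] tI[OF h(1)] tI[OF pG]
        by (auto simp: carrG Geq multG mult cD mD \<phi>v tgg thh tpp tgh thg tgp tpg thp tph)
      moreover have "bij_betw \<phi> G ({0,1} \<times> {0,1})"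
        unfolding Geq bij_betw_def inj_on_def using dist by (auto simp: \<phi>v)
      ultimately show ?thesis unfolding iso_def cD by simp
    qed
    have disj: "\<forall>x\<in>G. \<forall>y\<in>G. x \<noteq> I \<longrightarrow> y \<noteq> I \<longrightarrow> x \<noteq> y \<longrightarrow> Fix x \<inter> Fix y = {}"
      using Agh Agp Ahp unfolding Geq by blast
    have un: "(\<Union>x\<in>G - {I}. Fix x) = Fix g \<union> Fix h \<union> Fix p" using dist unfolding Geq by auto
    have fin: "finite (Fix g)" "finite (Fix h)" "finite (Fix p)"
      using card2[OF g] card2[OF h] card2[OF pG pI] by auto
    have "card (Fix g \<union> Fix h \<union> Fix p) = 6"
      using card2[OF g] card2[OF h] card2[OF pG pI] Agh Agp Ahp fin
      by (simp add: card_Un_disjoint Int_Un_distrib2)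
    then show ?thesis using iso disj un fin one unfolding is_iso_def by auto
  qed
qed

end
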